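(* Let $n\ge 2$ and let $v_1,\dots,v_n\in\mathbb{R}^3$ be unit vectors, no two of which are parallel. Then the real symmetric $n\times n$ matrix $S=(\|v_i\times v_j\|)_{i,j=1}^n$ is non-singular and has signature $(1,n-1)$, i.e. it has exactly one positive eigenvalue and exactly $n-1$ negative eigenvalues.
   Context: $\times$ denotes the cross product on $\mathbb{R}^3$ and $\|\cdot\|$ the Euclidean norm; in particular the diagonal entries of $S$ are $0$. *)

theory Defs
  imports "HOL-Analysis.Cross3" "Jordan_Normal_Form.Char_Poly"
begin

definition eigen_count :: "real Matrix.mat \<Rightarrow> (real \<Rightarrow> bool) \<Rightarrow> nat" where
  "eigen_count A P = (\<Sum>a\<in>{a. P a \<and> eigenvalue A a}. order a (char_poly A))"

end

theory Submission
  imports Defs "HOL-Analysis.Generalised_Binomial_Theorem" "Jordan_Normal_Form.Jordan_Normal_Form_Existence"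
begin


definition cc :: "nat \<Rightarrow> real" where
  "cc k = (if k = 0 then 0 else - (((1/2::real) gchoose k) * (-1)^k))"

lemma gch_rec: "((1/2::real) gchoose Suc k) * (-1)^(Suc k) = ((1/2::real) gchoose k) * (-1)^k * ((real k - 1/2) / (real k + 1))"
proof -
  have "(1/2::real) * ((1/2) gchoose k) = real k * ((1/2) gchoose k) + real (Suc k) * ((1/2) gchoose Suc k)"
    by (rule gbinomial_mult_1)
  hence h: "((1/2::real) gchoose Suc k) = (1/2 - real k) / (real k + 1) * ((1/2) gchoose k)"
    by (simp add: field_simps)
  have "((1/2::real) gchoose Suc k) * (-1)^(Suc k) = - (((1/2::real) gchoose Suc k) * (-1)^k)" by simp
  also have "\<dots> = - ((1/2 - real k) / (real k + 1) * ((1/2) gchoose k) * (-1)^k)" by (simp only: h)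
  also have "\<dots> = ((1/2::real) gchoose k) * (-1)^k * ((real k - 1/2) / (real k + 1))"
    by (simp add: divide_simps) (simp add: algebra_simps)
  finally show ?thesis .
qed

lemma gch_neg: "k \<ge> 1 \<Longrightarrow> ((1/2::real) gchoose k) * (-1)^k < 0"
proof (induction k rule: dec_induct)
  case base
  show ?case by (simp add: gbinomial_Suc)
next
  case (step k)
  have "(real k - 1/2) / (real k + 1) > 0" using step(1) by auto
  thus ?case by (metis gch_rec mult_neg_pos step(3))
qed

lemma cc_pos: "k \<ge> 1 \<Longrightarrow> cc k > 0"
  using gch_neg[of k] by (simp add: cc_def)

lemma cc_nonneg: "cc k \<ge> 0"
  using cc_pos[of k] by (cases k) (auto simp: cc_def)

lemma cc_sums: assumes "0 \<le> t" "t < 1"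
  shows "(\<lambda>k. cc k * t^k) sums (1 - sqrt (1 - t))"
proof -
  have "\<bar>-t\<bar> < 1" using assms by auto
  from gen_binomial_real[OF this, of "1/2"]
  have "(\<lambda>k. ((1/2::real) gchoose k) * (-t)^k) sums sqrt (1 - t)"
    using assms by (simp add: powr_half_sqrt)
  hence a: "(\<lambda>k. - (((1/2::real) gchoose k) * (-t)^k)) sums (- sqrt (1 - t))"
    by (rule sums_minus)
  have b: "(\<lambda>k. if k = 0 then 1 else 0) sums (1::real)"
    using sums_single[of 0 "\<lambda>_. 1::real"] by simp
  have "(\<lambda>k. - (((1/2::real) gchoose k) * (-t)^k) + (if k = 0 then 1 else 0)) sums (- sqrt (1 - t) + 1)"
    by (rule sums_add[OF a b])
  moreover have "(\<lambda>k. - (((1/2::real) gchoose k) * (-t)^k) + (if k = 0 then 1 else 0)) = (\<lambda>k. cc k * t^k)"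
    by (rule ext) (simp add: cc_def power_mult_distrib[symmetric])
  ultimately show ?thesis by simp
qed

lemma cc_partial: "sum cc {..<N} \<le> 1"
proof -
  let ?f = "\<lambda>t::real. \<Sum>k<N. cc k * t^k"
  have lim: "(?f \<longlongrightarrow> ?f 1) (at_left 1)"
    by (intro tendsto_intros)
  have ev: "eventually (\<lambda>t. ?f t \<le> 1) (at_left (1::real))"
  proof -
    have "eventually (\<lambda>t. t \<in> {0<..<1}) (at_left (1::real))"
      by (rule eventually_at_left_real) simp
    thus ?thesis
    proof (rule eventually_mono)
      fix t :: real assume t: "t \<in> {0<..<1}"
      have s: "(\<lambda>k. cc k * t^k) sums (1 - sqrt (1 - t))" using cc_sums[of t] t by auto
      have nn: "\<And>n. 0 \<le> cc n * t^n" using t cc_nonneg by simp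
      have "?f t \<le> (1 - sqrt (1 - t))"
        using sum_le_suminf[OF sums_summable[OF s], of "{..<N}"] sums_unique[OF s] nn
        by auto
      also have "\<dots> \<le> 1" using t by simp
      finally show "?f t \<le> 1" .
    qed
  qed
  have "?f 1 \<le> 1"
    by (rule tendsto_le[OF trivial_limit_at_left_real tendsto_const lim ev])
  thus ?thesis by simp
qed

lemma cc_summable: "summable cc"
  by (rule summableI_nonneg_bounded[OF cc_nonneg cc_partial])

lemma cc_suminf: "suminf cc \<le> 1"
  using cc_summable cc_partial by (simp add: suminf_le_const)

lemma cc_summable_t: assumes "0 \<le> t" "t \<le> 1" shows "summable (\<lambda>k. cc k * t^k)"
proof (rule summable_comparison_test[OF _ cc_summable])
  have "norm (cc k * t ^ k) \<le> cc k" for k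
  proof -
    have "norm (cc k * t ^ k) = cc k * t^k" using assms cc_nonneg[of k] by simp
    also have "\<dots> \<le> cc k" by (rule mult_left_le) (use assms cc_nonneg in \<open>auto simp: power_le_one\<close>)
    finally show ?thesis .
  qed
  thus "\<exists>N. \<forall>k\<ge>N. norm (cc k * t ^ k) \<le> cc k" by blast
qed

lemma inner_pow_expand:
  fixes a b :: "real^3"
  shows "(a \<bullet> b)^m = (\<Sum>p\<le>m. \<Sum>q\<le>m-p. real (m choose p) * real ((m-p) choose q) *
            ((a$1*b$1)^p * (a$2*b$2)^q * (a$3*b$3)^(m-p-q)))"
proof -
  have "a \<bullet> b = a$1*b$1 + (a$2*b$2 + a$3*b$3)" by (simp add: inner_vec_def sum_3)
  hence "(a \<bullet> b)^m = (\<Sum>p\<le>m. real (m choose p) * (a$1*b$1)^p * (a$2*b$2 + a$3*b$3)^(m-p))"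
    by (simp add: binomial_ring)
  also have "\<dots> = (\<Sum>p\<le>m. real (m choose p) * (a$1*b$1)^p *
      (\<Sum>q\<le>m-p. real ((m-p) choose q) * (a$2*b$2)^q * (a$3*b$3)^(m-p-q)))"
    by (simp add: binomial_ring)
  also have "\<dots> = (\<Sum>p\<le>m. \<Sum>q\<le>m-p. real (m choose p) * real ((m-p) choose q) *
            ((a$1*b$1)^p * (a$2*b$2)^q * (a$3*b$3)^(m-p-q)))"
    by (simp add: sum_distrib_left mult_ac)
  finally show ?thesis .
qed


lemma quad_expand:
  fixes x :: "nat \<Rightarrow> real" and v :: "nat \<Rightarrow> real^3" and w :: "real^3" and n m :: nat
  defines "Y \<equiv> \<lambda>p q. \<Sum>i<n. x i * ((v i$1)^p * (v i$2)^q * (v i$3)^(m-p-q))"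
  shows "(\<Sum>i<n. x i * (v i \<bullet> w)^m) = (\<Sum>p\<le>m. \<Sum>q\<le>m-p. real (m choose p) * real ((m-p) choose q) *
            ((w$1)^p * (w$2)^q * (w$3)^(m-p-q)) * Y p q)"
proof -
  have "(\<Sum>i<n. x i * (v i \<bullet> w)^m) = (\<Sum>i<n. \<Sum>p\<le>m. \<Sum>q\<le>m-p. real (m choose p) * real ((m-p) choose q) *
            ((w$1)^p * (w$2)^q * (w$3)^(m-p-q)) * (x i * ((v i$1)^p * (v i$2)^q * (v i$3)^(m-p-q))))"
    by (simp add: inner_pow_expand sum_distrib_left power_mult_distrib mult_ac)
  also have "\<dots> = (\<Sum>p\<le>m. \<Sum>i<n. \<Sum>q\<le>m-p. real (m choose p) * real ((m-p) choose q) *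
            ((w$1)^p * (w$2)^q * (w$3)^(m-p-q)) * (x i * ((v i$1)^p * (v i$2)^q * (v i$3)^(m-p-q))))"
    by (rule sum.swap)
  also have "\<dots> = (\<Sum>p\<le>m. \<Sum>q\<le>m-p. \<Sum>i<n. real (m choose p) * real ((m-p) choose q) *
            ((w$1)^p * (w$2)^q * (w$3)^(m-p-q)) * (x i * ((v i$1)^p * (v i$2)^q * (v i$3)^(m-p-q))))"
    by (intro sum.cong refl sum.swap)
  also have "\<dots> = (\<Sum>p\<le>m. \<Sum>q\<le>m-p. real (m choose p) * real ((m-p) choose q) *
            ((w$1)^p * (w$2)^q * (w$3)^(m-p-q)) * Y p q)"
    by (simp add: Y_def sum_distrib_left)
  finally show ?thesis .
qed

lemma quad_form:
  fixes x :: "nat \<Rightarrow> real" and v :: "nat \<Rightarrow> real^3" and n m :: nat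
  defines "Y \<equiv> \<lambda>p q. \<Sum>i<n. x i * ((v i$1)^p * (v i$2)^q * (v i$3)^(m-p-q))"
  shows "(\<Sum>j<n. x j * (\<Sum>i<n. x i * (v i \<bullet> v j)^m)) = (\<Sum>p\<le>m. \<Sum>q\<le>m-p. real (m choose p) * real ((m-p) choose q) * (Y p q)^2)"
proof -
  have "(\<Sum>j<n. x j * (\<Sum>i<n. x i * (v i \<bullet> v j)^m)) = (\<Sum>j<n. x j * (\<Sum>p\<le>m. \<Sum>q\<le>m-p. real (m choose p) * real ((m-p) choose q) *
            ((v j$1)^p * (v j$2)^q * (v j$3)^(m-p-q)) * Y p q))"
    unfolding Y_def by (simp add: quad_expand)
  also have "\<dots> = (\<Sum>j<n. \<Sum>p\<le>m. \<Sum>q\<le>m-p. real (m choose p) * real ((m-p) choose q) * Y p q *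
            (x j * ((v j$1)^p * (v j$2)^q * (v j$3)^(m-p-q))))"
    by (simp add: sum_distrib_left mult_ac)
  also have "\<dots> = (\<Sum>p\<le>m. \<Sum>j<n. \<Sum>q\<le>m-p. real (m choose p) * real ((m-p) choose q) * Y p q *
            (x j * ((v j$1)^p * (v j$2)^q * (v j$3)^(m-p-q))))"
    by (rule sum.swap)
  also have "\<dots> = (\<Sum>p\<le>m. \<Sum>q\<le>m-p. \<Sum>j<n. real (m choose p) * real ((m-p) choose q) * Y p q *
            (x j * ((v j$1)^p * (v j$2)^q * (v j$3)^(m-p-q))))"
    by (intro sum.cong refl sum.swap)
  also have "\<dots> = (\<Sum>p\<le>m. \<Sum>q\<le>m-p. real (m choose p) * real ((m-p) choose q) * (Y p q)^2)"
  proof (intro sum.cong refl)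
    fix p q
    have "(\<Sum>j<n. x j * ((v j$1)^p * (v j$2)^q * (v j$3)^(m-p-q))) = Y p q" by (simp only: Y_def)
    thus "(\<Sum>j<n. real (m choose p) * real ((m-p) choose q) * Y p q *
            (x j * ((v j$1)^p * (v j$2)^q * (v j$3)^(m-p-q)))) = real (m choose p) * real ((m-p) choose q) * (Y p q)^2"
      by (simp only: sum_distrib_left[symmetric] power2_eq_square mult.assoc)
  qed
  finally show ?thesis .
qed

lemma quad_nonneg:
  fixes x :: "nat \<Rightarrow> real" and v :: "nat \<Rightarrow> real^3"
  shows "(\<Sum>j<n. x j * (\<Sum>i<n. x i * (v i \<bullet> v j)^m)) \<ge> 0"
  unfolding quad_form by (intro sum_nonneg mult_nonneg_nonneg) auto

lemma quad_zero:
  fixes x :: "nat \<Rightarrow> real" and v :: "nat \<Rightarrow> real^3"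
  assumes "(\<Sum>j<n. x j * (\<Sum>i<n. x i * (v i \<bullet> v j)^m)) = 0"
  shows "(\<Sum>i<n. x i * (v i \<bullet> w)^m) = 0"
proof -
  define Y where "Y = (\<lambda>p q. \<Sum>i<n. x i * ((v i$1)^p * (v i$2)^q * (v i$3)^(m-p-q)))"
  have eq: "(\<Sum>p\<le>m. \<Sum>q\<le>m-p. real (m choose p) * real ((m-p) choose q) * (Y p q)^2) = 0"
    using assms unfolding quad_form Y_def .
  have "\<forall>p\<in>{..m}. (\<Sum>q\<le>m-p. real (m choose p) * real ((m-p) choose q) * (Y p q)^2) = 0"
    by (rule sum_nonneg_eq_0_iff[THEN iffD1, OF _ _ eq]) (auto intro!: sum_nonneg)
  hence "\<forall>p\<in>{..m}. \<forall>q\<in>{..m-p}. real (m choose p) * real ((m-p) choose q) * (Y p q)^2 = 0"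
    by (subst (asm) sum_nonneg_eq_0_iff) auto
  hence Y0: "\<And>p q. p \<le> m \<Longrightarrow> q \<le> m - p \<Longrightarrow> Y p q = 0"
    by auto
  show ?thesis
  proof (subst quad_expand, intro sum.neutral ballI)
    fix p q assume "p \<in> {..m}" "q \<in> {..m-p}"
    thus "real (m choose p) * real ((m-p) choose q) *
            ((w$1)^p * (w$2)^q * (w$3)^(m-p-q)) *
         (\<Sum>i<n. x i * ((v i$1)^p * (v i$2)^q * (v i$3)^(m-p-q))) = 0"
      using Y0[of p q] unfolding Y_def by simp
  qed
qed


lemma negdef:
  fixes v :: "nat \<Rightarrow> real^3" and x :: "nat \<Rightarrow> real" and n :: nat
  assumes unit: "\<And>i. i < n \<Longrightarrow> norm (v i) = 1"
    and np: "\<And>i j. i < n \<Longrightarrow> j < n \<Longrightarrow> i \<noteq> j \<Longrightarrow> cross3 (v i) (v j) \<noteq> 0"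
    and s0: "(\<Sum>i<n. x i) = 0" and nz: "\<exists>i<n. x i \<noteq> 0"
  shows "(\<Sum>i<n. \<Sum>j<n. x i * x j * norm (cross3 (v i) (v j))) < 0"
proof -
  define t where "t = (\<lambda>i j. (v i \<bullet> v j)^2)"
  have nc: "(norm (cross3 (v i) (v j)))^2 = 1 - t i j" if "i < n" "j < n" for i j
    using norm_cross_dot[of "v i" "v j"] unit that unfolding t_def by simp
  have t0: "0 \<le> t i j" for i j unfolding t_def by simp
  have t1: "t i j \<le> 1" if "i < n" "j < n" for i j
    using nc[OF that] by (smt (verit) zero_le_power2)
  have tii: "t i i = 1" if "i < n" for i
    using unit[OF that] unfolding t_def by (simp add: power2_norm_eq_inner[symmetric])
  have tlt: "t i j < 1" if "i < n" "j < n" "i \<noteq> j" for i j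
  proof -
    have "norm (cross3 (v i) (v j)) > 0" using np[OF that] by simp
    thus ?thesis using nc[OF that(1,2)] by (smt (verit) zero_less_power2)
  qed
  have ncs: "norm (cross3 (v i) (v j)) = sqrt (1 - t i j)" if "i < n" "j < n" for i j
    using nc[OF that] by (simp add: real_sqrt_unique)
  define g where "g = (\<lambda>s. suminf (\<lambda>k. cc k * s^k))"
  define C where "C = suminf cc"
  have gs: "(\<lambda>k. cc k * t i j^k) sums g (t i j)" if "i < n" "j < n" for i j
    unfolding g_def by (rule summable_sums[OF cc_summable_t[OF t0 t1[OF that]]])
  have F: "1 - norm (cross3 (v i) (v j)) = g (t i j) + (if i = j then 1 - C else 0)"
    if "i < n" "j < n" for i j
  proof (cases "i = j")
    case True
    then show ?thesis using tii[OF that(1)] by (simp add: g_def C_def)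
  next
    case False
    have "g (t i j) = 1 - sqrt (1 - t i j)"
      using sums_unique2[OF gs[OF that] cc_sums[OF t0 tlt[OF that False]]] .
    then show ?thesis using False ncs[OF that] by simp
  qed
  define P where "P = (\<lambda>k. \<Sum>i<n. \<Sum>j<n. x i * x j * t i j ^ k)"
  define Q where "Q = (\<Sum>i<n. \<Sum>j<n. x i * x j * (1 - norm (cross3 (v i) (v j))))"
  have sq: "(\<Sum>i<n. \<Sum>j<n. x i * x j) = 0"
    using s0 by (simp add: sum_product[symmetric])
  have LQ: "(\<Sum>i<n. \<Sum>j<n. x i * x j * norm (cross3 (v i) (v j))) = - Q"
  proof -
    have "Q = (\<Sum>i<n. \<Sum>j<n. x i * x j) - (\<Sum>i<n. \<Sum>j<n. x i * x j * norm (cross3 (v i) (v j)))"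
      unfolding Q_def by (simp add: algebra_simps sum_subtractf)
    thus ?thesis using sq by simp
  qed
  have Qeq: "Q = (\<Sum>i<n. \<Sum>j<n. x i * x j * g (t i j)) + (1 - C) * (\<Sum>i<n. x i * x i)"
  proof -
    have "Q = (\<Sum>i<n. \<Sum>j<n. x i * x j * g (t i j) + x i * x j * (if i = j then 1 - C else 0))"
      unfolding Q_def by (intro sum.cong refl) (simp add: F algebra_simps)
    also have "\<dots> = (\<Sum>i<n. \<Sum>j<n. x i * x j * g (t i j)) + (\<Sum>i<n. \<Sum>j<n. x i * x j * (if i = j then 1 - C else 0))"
      by (simp add: sum.distrib)
    also have "(\<Sum>i<n. \<Sum>j<n. x i * x j * (if i = j then 1 - C else 0)) = (\<Sum>i<n. x i * x i * (1 - C))"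
      by (intro sum.cong refl) (simp add: if_distrib sum.delta cong: if_cong)
    also have "(\<Sum>i<n. x i * x i * (1 - C)) = (1 - C) * (\<Sum>i<n. x i * x i)"
      by (simp add: sum_distrib_left mult_ac)
    finally show ?thesis .
  qed
  have Psums: "(\<lambda>k. cc k * P k) sums (\<Sum>i<n. \<Sum>j<n. x i * x j * g (t i j))"
  proof -
    have "(\<lambda>k. \<Sum>i<n. \<Sum>j<n. x i * x j * (cc k * t i j ^ k)) sums (\<Sum>i<n. \<Sum>j<n. x i * x j * g (t i j))"
      by (intro sums_sum sums_mult gs) auto
    moreover have "(\<lambda>k. \<Sum>i<n. \<Sum>j<n. x i * x j * (cc k * t i j ^ k)) = (\<lambda>k. cc k * P k)"
      unfolding P_def by (simp add: sum_distrib_left mult_ac)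
    ultimately show ?thesis by simp
  qed
  have Pquad: "P k = (\<Sum>j<n. x j * (\<Sum>i<n. x i * (v i \<bullet> v j)^(2*k)))" for k
  proof -
    have "P k = (\<Sum>j<n. \<Sum>i<n. x i * x j * t i j ^ k)" unfolding P_def by (rule sum.swap)
    also have "\<dots> = (\<Sum>j<n. x j * (\<Sum>i<n. x i * (v i \<bullet> v j)^(2*k)))"
      unfolding t_def by (simp add: sum_distrib_left power_mult[symmetric] mult_ac)
    finally show ?thesis .
  qed
  have Pnn: "P k \<ge> 0" for k unfolding Pquad by (rule quad_nonneg)
  have C1: "C \<le> 1" unfolding C_def by (rule cc_suminf)
  have "Q > 0"
  proof (rule ccontr)
    assume "\<not> Q > 0"
    hence Qle: "Q \<le> 0" by simp
    have s1: "suminf (\<lambda>k. cc k * P k) \<ge> 0"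
      by (rule suminf_nonneg[OF sums_summable[OF Psums]]) (simp add: Pnn cc_nonneg)
    have s2: "(1 - C) * (\<Sum>i<n. x i * x i) \<ge> 0"
      using C1 by (intro mult_nonneg_nonneg) (auto intro!: sum_nonneg)
    have "suminf (\<lambda>k. cc k * P k) = 0"
      using Qle s1 s2 Qeq sums_unique[OF Psums] by linarith
    hence all0: "\<forall>k. cc k * P k = 0"
      using suminf_eq_zero_iff[OF sums_summable[OF Psums]] Pnn cc_nonneg by simp
    have zero: "(\<Sum>i<n. x i * t i j ^ k) = 0" if "k \<ge> 1" "j < n" for k j
    proof -
      have "P k = 0" using all0[rule_format, of k] cc_pos[OF that(1)] by auto
      hence "(\<Sum>i<n. x i * (v i \<bullet> v j)^(2*k)) = 0"
        unfolding Pquad by (rule quad_zero)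
      thus ?thesis unfolding t_def by (simp add: power_mult)
    qed
    have "x j = 0" if j: "j < n" for j
    proof -
      have lim: "(\<lambda>k. \<Sum>i<n. x i * t i j ^ k) \<longlonglongrightarrow> (\<Sum>i<n. x i * (if i = j then 1 else 0))"
      proof (intro tendsto_sum tendsto_mult_left)
        fix i assume i: "i \<in> {..<n}"
        show "(\<lambda>k. t i j ^ k) \<longlonglongrightarrow> (if i = j then 1 else 0)"
        proof (cases "i = j")
          case True
          then show ?thesis using tii j by simp
        next
          case False
          have "norm (t i j) < 1" using tlt[of i j] t0[of i j] i j False by simp
          then show ?thesis using False LIMSEQ_power_zero[of "t i j"] by simp
        qed
      qed
      have "(\<lambda>k. \<Sum>i<n. x i * t i j ^ Suc k) = (\<lambda>k. 0)"
        using zero[OF _ j] by (intro ext) (simp only: Suc_le_eq zero_less_Suc)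
      hence "(\<lambda>k. \<Sum>i<n. x i * t i j ^ Suc k) \<longlonglongrightarrow> 0" by simp
      hence "(\<lambda>k. \<Sum>i<n. x i * t i j ^ k) \<longlonglongrightarrow> 0"
        by (rule LIMSEQ_imp_Suc)
      from LIMSEQ_unique[OF lim this] show ?thesis using j by (simp add: if_distrib sum.delta cong: if_cong)
    qed
    thus False using nz by auto
  qed
  thus ?thesis using LQ by simp
qed



interpretation rp: map_poly_inj_comm_ring_hom "of_real :: real \<Rightarrow> complex" ..

lemma herm_real:
  fixes S :: "real Matrix.mat"
  assumes S: "S \<in> carrier_mat n n"
    and sym: "\<And>i j. i < n \<Longrightarrow> j < n \<Longrightarrow> S $$ (i,j) = S $$ (j,i)"
    and ev: "eigenvalue (of_real_hom.mat_hom S) a"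
  shows "Im a = 0"
proof -
  let ?Sc = "of_real_hom.mat_hom S :: complex Matrix.mat"
  define M where "M = (\<lambda>i j. complex_of_real (S $$ (i,j)))"
  from ev obtain v where v: "v \<in> carrier_vec n" "v \<noteq> 0\<^sub>v n" "?Sc *\<^sub>v v = a \<cdot>\<^sub>v v"
    unfolding eigenvalue_def eigenvector_def using S by auto
  have comp: "(\<Sum>j<n. M i j * v$j) = a * v$i" if i: "i < n" for i
  proof -
    have "(?Sc *\<^sub>v v) $ i = (\<Sum>j<n. M i j * v$j)"
      using S v(1) i by (simp add: scalar_prod_def M_def atLeast0LessThan Matrix.row_def)
    moreover have "(?Sc *\<^sub>v v) $ i = a * v$i" using v(3) v(1) i by simp
    ultimately show ?thesis by simp
  qed
  obtain i0 where i0: "i0 < n" "v $ i0 \<noteq> 0"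
    using v(1,2) by (metis carrier_vecD eq_vecI index_zero_vec(1) index_zero_vec(2))
  define s where "s = (\<Sum>i<n. cnj (v$i) * (\<Sum>j<n. M i j * v$j))"
  define Nv where "Nv = (\<Sum>i<n. (cmod (v$i))^2)"
  have Nvpos: "Nv > 0"
  proof -
    have "Nv \<ge> (cmod (v$i0))^2" unfolding Nv_def
      by (rule member_le_sum) (use i0 in auto)
    moreover have "(cmod (v$i0))^2 > 0" using i0 by simp
    ultimately show ?thesis by linarith
  qed
  have s1: "s = a * of_real Nv"
  proof -
    have "s = (\<Sum>i<n. a * (cnj (v$i) * v$i))" unfolding s_def by (intro sum.cong refl) (simp add: comp)
    also have "\<dots> = a * of_real Nv"
    proof -
      have "of_real ((cmod z)^2) = cnj z * z" for z
        by (metis complex_norm_square mult.commute of_real_power)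
      thus ?thesis unfolding Nv_def by (simp add: sum_distrib_left)
    qed
    finally show ?thesis .
  qed
  have s2: "cnj s = s"
  proof -
    have "cnj s = (\<Sum>i<n. \<Sum>j<n. v$i * M i j * cnj (v$j))"
      unfolding s_def by (simp add: sum_distrib_left M_def mult_ac)
    also have "\<dots> = (\<Sum>j<n. \<Sum>i<n. v$i * M i j * cnj (v$j))" by (rule sum.swap)
    also have "\<dots> = (\<Sum>j<n. \<Sum>i<n. cnj (v$j) * (M j i * v$i))"
      by (intro sum.cong refl) (simp add: M_def sym mult_ac)
    also have "\<dots> = s" unfolding s_def by (simp add: sum_distrib_left)
    finally show ?thesis .
  qed
  have "cnj a * of_real Nv = a * of_real Nv" using s1 s2 by (metis complex_cnj_complex_of_real complex_cnj_mult)
  hence "cnj a = a" using Nvpos by simp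
  thus ?thesis by (metis Reals_cnj_iff complex_is_Real_iff)
qed

lemma sym_split:
  fixes S :: "real Matrix.mat"
  assumes S: "S \<in> carrier_mat n n"
    and sym: "\<And>i j. i < n \<Longrightarrow> j < n \<Longrightarrow> S $$ (i,j) = S $$ (j,i)"
  shows "\<exists>es. char_poly S = (\<Prod>e\<leftarrow>es. [:- e, 1:])"
proof -
  let ?Sc = "of_real_hom.mat_hom S :: complex Matrix.mat"
  have Sc: "?Sc \<in> carrier_mat n n" using S by simp
  obtain as where as: "char_poly ?Sc = (\<Prod>a\<leftarrow>as. [:- a, 1:])"
    using char_poly_factorized[OF Sc] by auto
  have re: "Im a = 0" if "a \<in> set as" for a
  proof (rule herm_real[OF S sym])
    show "eigenvalue ?Sc a" unfolding eigenvalue_root_char_poly[OF Sc] as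
      using that by (rule linear_poly_root)
  qed
  have lin: "map_poly complex_of_real [:- e, 1:] = [:- complex_of_real e, 1:]" for e
    by (simp add: map_poly_pCons)
  define es where "es = map Re as"
  have "as = map of_real es" unfolding es_def using re
    by (induct as) (auto simp: complex_eq_iff)
  moreover have ch: "char_poly ?Sc = map_poly complex_of_real (char_poly S)"
    by (rule of_real_hom.char_poly_hom[OF S])
  moreover have pm: "map_poly of_real (\<Prod>e\<leftarrow>es. [:- e, 1:]) = (\<Prod>e\<leftarrow>es. [:- complex_of_real e, 1:])"
  proof (induct es)
    case (Cons e es)
    have "map_poly complex_of_real (\<Prod>e\<leftarrow>e # es. [:- e, 1:]) = map_poly complex_of_real [:- e, 1:] * map_poly complex_of_real (\<Prod>e\<leftarrow>es. [:- e, 1:])"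
      by (simp only: list.map prod_list.Cons) (rule rp.hom_mult)
    also have "\<dots> = (\<Prod>e\<leftarrow>e # es. [:- complex_of_real e, 1:])" by (simp only: lin Cons list.map prod_list.Cons)
    finally show ?case .
  qed simp
  ultimately have "map_poly complex_of_real (char_poly S) = map_poly complex_of_real (\<Prod>e\<leftarrow>es. [:- e, 1:])"
    using as by (simp add: o_def)
  hence "char_poly S = (\<Prod>e\<leftarrow>es. [:- e, 1:])" by simp
  thus ?thesis by blast
qed



lemma jm_offdiag:
  fixes n_as :: "(nat \<times> 'a::{zero,one}) list"
  shows "i < sum_list (map fst n_as) \<Longrightarrow> j < sum_list (map fst n_as) \<Longrightarrow> i \<noteq> j \<Longrightarrow> Suc i \<noteq> j
    \<Longrightarrow> jordan_matrix n_as $$ (i,j) = 0"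
proof (induct n_as arbitrary: i j)
  case Nil
  then show ?case by simp
next
  case (Cons ma rest)
  obtain m a where ma: "ma = (m,a)" by force
  show ?case using Cons.prems Cons.hyps[of "i - m" "j - m"] unfolding ma jordan_matrix_Cons
    by (auto simp: Suc_diff_le)
qed

lemma jm_super:
  fixes n_as :: "(nat \<times> 'a::{zero,one}) list"
  shows "Suc i < sum_list (map fst n_as) \<Longrightarrow> jordan_matrix n_as $$ (i, Suc i) \<noteq> 0
    \<Longrightarrow> jordan_matrix n_as $$ (i, Suc i) = 1 \<and> jordan_matrix n_as $$ (i,i) = jordan_matrix n_as $$ (Suc i, Suc i)"
proof (induct n_as arbitrary: i)
  case Nil
  then show ?case by simp
next
  case (Cons ma rest)
  obtain m a where ma: "ma = (m,a)" by force
  show ?case using Cons.prems Cons.hyps[of "i - m"] unfolding ma jordan_matrix_Cons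
    by (auto simp: Suc_diff_le)
qed

lemma mult_entry:
  assumes "A \<in> carrier_mat n n" "B \<in> carrier_mat n n" "i < n" "j < n"
  shows "(A * B) $$ (i,j) = (\<Sum>k<n. A $$ (i,k) * B $$ (k,j))"
  using assms by (simp add: scalar_prod_def Matrix.row_def col_def atLeast0LessThan)

lemma count_filter: "count_list (filter P xs) a = (if P a then count_list xs a else 0)"
  by (induct xs) auto

lemma lin_prod_nz: "(\<Prod>e\<leftarrow>es. [:- e, 1:]) \<noteq> (0 :: 'a :: idom poly)"
proof (induct es)
  case (Cons e es)
  have "[:- e, 1:] \<noteq> (0 :: 'a poly)" by simp
  with Cons show ?case by (simp only: list.map prod_list.Cons mult_eq_0_iff) simp
qed simp

lemma order_lin_prod: "order a (\<Prod>e\<leftarrow>es. [:- e, 1:]) = count_list es a"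
proof (induct es)
  case Nil
  then show ?case by (simp add: order_0I)
next
  case (Cons e es)
  have "order a (\<Prod>e\<leftarrow>e # es. [:- e, 1:]) = order a ([:- e, 1:] * (\<Prod>e\<leftarrow>es. [:- e, 1:]))" by simp
  also have "\<dots> = order a [:- e, 1:] + order a (\<Prod>e\<leftarrow>es. [:- e, 1:])"
    by (rule order_mult) (simp only: mult_eq_0_iff lin_prod_nz, simp)
  also have "\<dots> = (if e = a then 1 else 0) + count_list es a"
    using Cons by (simp add: order_linear')
  finally show ?case by simp
qed

lemma eigen_count_split:
  assumes S: "S \<in> carrier_mat n n" and cp: "char_poly S = (\<Prod>e\<leftarrow>es. [:- e, 1:])"
  shows "eigen_count S P = length (filter P es)"
proof -
  have ev: "eigenvalue S a \<longleftrightarrow> a \<in> set es" for a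
    unfolding eigenvalue_root_char_poly[OF S] cp poly_prod_list_zero_iff by auto
  have "{a. P a \<and> eigenvalue S a} = set (filter P es)" using ev by auto
  hence "eigen_count S P = (\<Sum>a\<in>set (filter P es). count_list es a)"
    unfolding eigen_count_def cp order_lin_prod by simp
  also have "\<dots> = (\<Sum>a\<in>set (filter P es). count_list (filter P es) a)"
    by (intro sum.cong refl) (auto simp: count_filter)
  also have "\<dots> = length (filter P es)" by (rule sum_count_set) auto
  finally show ?thesis .
qed


lemma signature:
  fixes S :: "real Matrix.mat"
  assumes S: "S \<in> carrier_mat n n" and n2: "n \<ge> 2"
    and sym: "\<And>i j. i < n \<Longrightarrow> j < n \<Longrightarrow> S $$ (i,j) = S $$ (j,i)"
    and diag0: "\<And>i. i < n \<Longrightarrow> S $$ (i,i) = 0"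
    and neg: "\<And>x. (\<Sum>i<n. x i) = 0 \<Longrightarrow> (\<exists>i<n. x i \<noteq> 0) \<Longrightarrow> (\<Sum>i<n. \<Sum>j<n. x i * x j * S $$ (i,j)) < 0"
    and cp: "char_poly S = (\<Prod>e\<leftarrow>es. [:- e, 1:])"
  shows "Determinant.det S \<noteq> 0 \<and> eigen_count S (\<lambda>a. a > 0) = 1 \<and> eigen_count S (\<lambda>a. a < 0) = n - 1"
proof -
  obtain n_as where jnf: "jordan_nf S n_as" using jordan_nf_exists[OF S cp] by blast
  define J where "J = jordan_matrix n_as"
  from jnf obtain P Q where wit: "similar_mat_wit S J P Q"
    unfolding jordan_nf_def similar_mat_def J_def by blast
  have dimS: "dim_row S = n" using S by simp
  from wit have J: "J \<in> carrier_mat n n" and P: "P \<in> carrier_mat n n" and Q: "Q \<in> carrier_mat n n"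
    and PQ: "P * Q = 1\<^sub>m n" and QP: "Q * P = 1\<^sub>m n" and SPJQ: "S = P * J * Q"
    unfolding similar_mat_wit_def Let_def dimS by auto
  have NJ: "sum_list (map fst n_as) = n" using J unfolding J_def by (metis carrier_matD(1) jordan_matrix_dim(1))
  have SP: "S * P = P * J"
  proof -
    have "S * P = P * J * (Q * P)" using SPJQ P J Q by (simp add: assoc_mult_mat[of _ n n _ n _ n])
    also have "\<dots> = P * J" using QP P J by simp
    finally show ?thesis .
  qed
  have SPe: "(\<Sum>m<n. S $$ (l,m) * P $$ (m,k)) = (\<Sum>m<n. P $$ (l,m) * J $$ (m,k))" if "l < n" "k < n" for l k
    using arg_cong[OF SP, of "\<lambda>M. M $$ (l,k)"] mult_entry[OF S P that] mult_entry[OF P J that] by simp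
  have QPe: "(\<Sum>m<n. Q $$ (i,m) * P $$ (m,k)) = (if i = k then 1 else 0)" if "i < n" "k < n" for i k
    using arg_cong[OF QP, of "\<lambda>M. M $$ (i,k)"] mult_entry[OF Q P that] that by simp
  have PQe: "(\<Sum>m<n. P $$ (i,m) * Q $$ (m,k)) = (if i = k then 1 else 0)" if "i < n" "k < n" for i k
    using arg_cong[OF PQ, of "\<lambda>M. M $$ (i,k)"] mult_entry[OF P Q that] that by simp
  have offd: "J $$ (i,j) = 0" if "i < n" "j < n" "i \<noteq> j" "Suc i \<noteq> j" for i j
    using jm_offdiag[of i n_as j] that NJ unfolding J_def by simp
  have sup: "J $$ (i, Suc i) = 1 \<and> J $$ (i,i) = J $$ (Suc i, Suc i)" if "Suc i < n" "J $$ (i, Suc i) \<noteq> 0" for i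
    using jm_super[of i n_as] that NJ unfolding J_def by simp
  have symB: "(\<Sum>l<n. u l * (\<Sum>m<n. S $$ (l,m) * w m)) = (\<Sum>m<n. w m * (\<Sum>l<n. S $$ (m,l) * u l))" for u w
  proof -
    have "(\<Sum>l<n. u l * (\<Sum>m<n. S $$ (l,m) * w m)) = (\<Sum>l<n. \<Sum>m<n. w m * (S $$ (m,l) * u l))"
      by (intro sum.cong refl) (simp add: sum_distrib_left sym mult_ac)
    also have "\<dots> = (\<Sum>m<n. \<Sum>l<n. w m * (S $$ (m,l) * u l))" by (rule sum.swap)
    also have "\<dots> = (\<Sum>m<n. w m * (\<Sum>l<n. S $$ (m,l) * u l))" by (simp add: sum_distrib_left)
    finally show ?thesis .
  qed
  have colnz: "\<exists>l<n. P $$ (l,k) \<noteq> 0" if "k < n" for k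
  proof (rule ccontr)
    assume "\<not> ?thesis"
    hence "(\<Sum>m<n. Q $$ (k,m) * P $$ (m,k)) = 0" by simp
    thus False using QPe[OF that that] by simp
  qed
  have nosup: "J $$ (k, Suc k) = 0" if "Suc k < n" for k
  proof (rule ccontr)
    assume "J $$ (k, Suc k) \<noteq> 0"
    hence ex: "\<exists>k. Suc k < n \<and> J $$ (k, Suc k) \<noteq> 0" using that by blast
    define k0 where "k0 = (LEAST k. Suc k < n \<and> J $$ (k, Suc k) \<noteq> 0)"
    have k0: "Suc k0 < n" "J $$ (k0, Suc k0) \<noteq> 0"
      using LeastI_ex[OF ex] unfolding k0_def by auto
    have min: "J $$ (k', Suc k') = 0" if "k' < k0" for k'
      using not_less_Least[OF that[unfolded k0_def]] k0(1) that unfolding k0_def by auto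
    obtain d where d: "J $$ (k0, Suc k0) = 1" "J $$ (k0,k0) = d" "J $$ (Suc k0, Suc k0) = d"
      using sup[OF k0] by auto
    have colk: "J $$ (m, k0) = (if m = k0 then d else 0)" if "m < n" for m
    proof -
      consider "m = k0" | "Suc m = k0" | "m \<noteq> k0" "Suc m \<noteq> k0" by blast
      thus ?thesis
      proof cases
        case 2 thus ?thesis using min[of m] by auto
      next
        case 3 thus ?thesis using offd[OF that _ 3] k0 by auto
      qed (use d in auto)
    qed
    have colk1: "J $$ (m, Suc k0) = (if m = Suc k0 then d else if m = k0 then 1 else 0)" if "m < n" for m
      using offd[OF that k0(1), of] d by (cases "m = Suc k0"; cases "m = k0"; auto)
    define u where "u = (\<lambda>l. P $$ (l,k0))"
    define w where "w = (\<lambda>l. P $$ (l,Suc k0))"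
    have Eu: "(\<Sum>m<n. S $$ (l,m) * u m) = d * u l" if "l < n" for l
    proof -
      have "(\<Sum>m<n. S $$ (l,m) * u m) = (\<Sum>m<n. P $$ (l,m) * J $$ (m,k0))"
        unfolding u_def using SPe[OF that] k0 by simp
      also have "\<dots> = (\<Sum>m<n. P $$ (l,m) * (if m = k0 then d else 0))"
        by (intro sum.cong refl) (simp add: colk)
      also have "\<dots> = d * u l" using k0 by (simp add: u_def if_distrib sum.delta cong: if_cong)
      finally show ?thesis .
    qed
    have Ew: "(\<Sum>m<n. S $$ (l,m) * w m) = d * w l + u l" if "l < n" for l
    proof -
      have "(\<Sum>m<n. S $$ (l,m) * w m) = (\<Sum>m<n. P $$ (l,m) * J $$ (m,Suc k0))"
        unfolding w_def using SPe[OF that] k0 by simp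
      also have "\<dots> = (\<Sum>m<n. P $$ (l,m) * (if m = Suc k0 then d else 0) + P $$ (l,m) * (if m = k0 then 1 else 0))"
        by (intro sum.cong refl) (simp add: colk1)
      also have "\<dots> = (\<Sum>m<n. if m = Suc k0 then P $$ (l,m) * d else 0) + (\<Sum>m<n. if m = k0 then P $$ (l,m) else 0)"
        by (simp only: sum.distrib) (intro arg_cong2[where f="(+)"] sum.cong refl; simp)
      also have "\<dots> = d * w l + u l" using k0 by (simp only: sum.delta finite_lessThan) (simp add: u_def w_def)
      finally show ?thesis .
    qed
    have "(\<Sum>l<n. u l * (\<Sum>m<n. S $$ (l,m) * w m)) = (\<Sum>l<n. d * (u l * w l) + u l * u l)"
      by (intro sum.cong refl) (use Ew in \<open>simp add: algebra_simps\<close>)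
    moreover have "(\<Sum>m<n. w m * (\<Sum>l<n. S $$ (m,l) * u l)) = (\<Sum>l<n. d * (u l * w l))"
      by (intro sum.cong refl) (use Eu in \<open>simp add: algebra_simps\<close>)
    ultimately have "(\<Sum>l<n. u l * u l) = 0" using symB[of u w] by (simp add: sum.distrib)
    hence "\<forall>l\<in>{..<n}. u l * u l = 0" by (subst (asm) sum_nonneg_eq_0_iff) auto
    thus False using colnz[OF Suc_lessD[OF k0(1)]] unfolding u_def by auto
  qed
  define d where "d = (\<lambda>i. J $$ (i,i))"
  have Jdiag: "J $$ (i,j) = (if i = j then d i else 0)" if "i < n" "j < n" for i j
  proof (cases "i = j")
    case False
    show ?thesis
    proof (cases "Suc i = j")
      case True thus ?thesis using nosup[of i] that by auto
    qed (use offd[OF that False] False in auto)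
  qed (simp add: d_def)
  have EV: "(\<Sum>m<n. S $$ (l,m) * P $$ (m,k)) = d k * P $$ (l,k)" if "l < n" "k < n" for l k
  proof -
    have "(\<Sum>m<n. S $$ (l,m) * P $$ (m,k)) = (\<Sum>m<n. P $$ (l,m) * (if m = k then d k else 0))"
      using SPe[OF that] Jdiag that by (simp cong: if_cong)
    also have "\<dots> = d k * P $$ (l,k)" using that by (simp add: if_distrib sum.delta cong: if_cong)
    finally show ?thesis .
  qed
  have two: False if ij: "i < n" "j < n" "i \<noteq> j" and di: "d i \<ge> 0" and dj: "d j \<ge> 0" for i j
  proof -
    define u where "u = (\<lambda>l. P $$ (l,i))"
    define w where "w = (\<lambda>l. P $$ (l,j))"
    define su where "su = (\<Sum>l<n. u l)"
    define sw where "sw = (\<Sum>l<n. w l)"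
    define \<alpha> where "\<alpha> = (if su = 0 \<and> sw = 0 then 1 else sw)"
    define \<beta> where "\<beta> = (if su = 0 \<and> sw = 0 then 0 else - su)"
    define y where "y = (\<lambda>l. \<alpha> * u l + \<beta> * w l)"
    have ab: "\<alpha> \<noteq> 0 \<or> \<beta> \<noteq> 0" unfolding \<alpha>_def \<beta>_def by auto
    have sy: "(\<Sum>l<n. y l) = 0"
      unfolding y_def by (simp add: sum.distrib sum_distrib_left[symmetric] su_def[symmetric] sw_def[symmetric] \<alpha>_def \<beta>_def)
    have ynz: "\<exists>l<n. y l \<noteq> 0"
    proof (rule ccontr)
      assume "\<not> ?thesis"
      hence y0: "\<And>l. l < n \<Longrightarrow> y l = 0" by auto
      have qy: "(\<Sum>l<n. Q $$ (k,l) * y l) = (if k = i then \<alpha> else 0) + (if k = j then \<beta> else 0)" if "k < n" for k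
      proof -
        have "(\<Sum>l<n. Q $$ (k,l) * y l) = \<alpha> * (\<Sum>l<n. Q $$ (k,l) * P $$ (l,i)) + \<beta> * (\<Sum>l<n. Q $$ (k,l) * P $$ (l,j))"
          unfolding y_def u_def w_def by (simp add: algebra_simps sum.distrib sum_distrib_left)
        thus ?thesis using QPe[OF that ij(1)] QPe[OF that ij(2)] by simp
      qed
      have "\<alpha> = 0" using qy[OF ij(1)] y0 ij by simp
      moreover have "\<beta> = 0" using qy[OF ij(2)] y0 ij by simp
      ultimately show False using ab by simp
    qed
    have N: "(\<Sum>i<n. \<Sum>j<n. y i * y j * S $$ (i,j)) < 0" by (rule neg[OF sy ynz])
    define a where "a = (\<Sum>l<n. u l * u l)"
    define b where "b = (\<Sum>l<n. w l * w l)"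
    define c where "c = (\<Sum>l<n. u l * w l)"
    have Eu: "(\<Sum>m<n. S $$ (l,m) * u m) = d i * u l" if "l < n" for l unfolding u_def using EV[OF that ij(1)] .
    have Ew: "(\<Sum>m<n. S $$ (l,m) * w m) = d j * w l" if "l < n" for l unfolding w_def using EV[OF that ij(2)] .
    have "(\<Sum>l<n. u l * (\<Sum>m<n. S $$ (l,m) * w m)) = (\<Sum>l<n. d j * (u l * w l))"
      by (intro sum.cong refl) (simp add: Ew)
    hence 1: "(\<Sum>l<n. u l * (\<Sum>m<n. S $$ (l,m) * w m)) = d j * c"
      unfolding c_def by (simp add: sum_distrib_left)
    have "(\<Sum>m<n. w m * (\<Sum>l<n. S $$ (m,l) * u l)) = (\<Sum>m<n. d i * (u m * w m))"
      by (intro sum.cong refl) (simp add: Eu)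
    hence 2: "(\<Sum>m<n. w m * (\<Sum>l<n. S $$ (m,l) * u l)) = d i * c"
      unfolding c_def by (simp add: sum_distrib_left)
    from 1 2 symB[of u w] have cd: "d j * c = d i * c" by (metis)
    have "(\<Sum>i<n. \<Sum>j<n. y i * y j * S $$ (i,j)) = (\<Sum>l<n. y l * (\<Sum>m<n. S $$ (l,m) * y m))"
      by (simp add: sum_distrib_left mult_ac)
    also have "\<dots> = (\<Sum>l<n. y l * (\<alpha> * d i * u l + \<beta> * d j * w l))"
    proof (intro sum.cong refl)
      fix l assume l: "l \<in> {..<n}"
      have "(\<Sum>m<n. S $$ (l,m) * y m) = \<alpha> * (\<Sum>m<n. S $$ (l,m) * u m) + \<beta> * (\<Sum>m<n. S $$ (l,m) * w m)"
        unfolding y_def by (simp add: algebra_simps sum.distrib sum_distrib_left)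
      thus "y l * (\<Sum>m<n. S $$ (l,m) * y m) = y l * (\<alpha> * d i * u l + \<beta> * d j * w l)"
        using Eu Ew l by simp
    qed
    also have "\<dots> = \<alpha>*\<alpha>*d i * a + \<alpha>*\<beta>*(d i + d j) * c + \<beta>*\<beta>*d j*b"
      unfolding y_def a_def b_def c_def by (simp add: algebra_simps sum.distrib sum_distrib_left)
    finally have Q: "(\<Sum>i<n. \<Sum>j<n. y i * y j * S $$ (i,j)) = \<alpha>*\<alpha>*d i * a + \<alpha>*\<beta>*(d i + d j) * c + \<beta>*\<beta>*d j*b" .
    have yy: "(\<Sum>l<n. y l * y l) = \<alpha>*\<alpha>*a + 2*\<alpha>*\<beta>*c + \<beta>*\<beta>*b"
      unfolding y_def a_def b_def c_def by (simp add: algebra_simps sum.distrib sum_distrib_left)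
    have yy0: "(\<Sum>l<n. y l * y l) \<ge> 0" by (rule sum_nonneg) simp
    have a0: "a \<ge> 0" unfolding a_def by (rule sum_nonneg) simp
    have b0: "b \<ge> 0" unfolding b_def by (rule sum_nonneg) simp
    have "\<alpha>*\<alpha>*d i * a + \<alpha>*\<beta>*(d i + d j) * c + \<beta>*\<beta>*d j*b \<ge> 0"
    proof (cases "c = 0")
      case True
      then show ?thesis using di dj a0 b0 by (simp add: mult_nonneg_nonneg)
    next
      case False
      hence "d j = d i" using cd by simp
      hence "\<alpha>*\<alpha>*d i * a + \<alpha>*\<beta>*(d i + d j) * c + \<beta>*\<beta>*d j*b = d i * (\<Sum>l<n. y l * y l)"
        using yy by (simp add: algebra_simps)
      then show ?thesis using di yy0 by simp
    qed
    thus False using N Q by simp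
  qed
  have JQSP: "J = Q * (S * P)"
  proof -
    have "Q * (S * P) = Q * (P * J)" by (simp add: SP)
    also have "\<dots> = (Q * P) * J" using Q P J by (simp add: assoc_mult_mat[of _ n n _ n _ n])
    also have "\<dots> = J" using QP J by simp
    finally show ?thesis by simp
  qed
  have tr: "(\<Sum>i<n. d i) = 0"
  proof -
    have SPc: "S * P \<in> carrier_mat n n" using S P by simp
    have "(\<Sum>i<n. d i) = (\<Sum>i<n. \<Sum>l<n. Q $$ (i,l) * (\<Sum>m<n. S $$ (l,m) * P $$ (m,i)))"
      unfolding d_def by (intro sum.cong refl) (simp add: JQSP mult_entry[OF Q SPc] mult_entry[OF S P])
    also have "\<dots> = (\<Sum>i<n. \<Sum>l<n. \<Sum>m<n. S $$ (l,m) * (P $$ (m,i) * Q $$ (i,l)))"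
      by (simp add: sum_distrib_left mult_ac)
    also have "\<dots> = (\<Sum>l<n. \<Sum>i<n. \<Sum>m<n. S $$ (l,m) * (P $$ (m,i) * Q $$ (i,l)))" by (rule sum.swap)
    also have "\<dots> = (\<Sum>l<n. \<Sum>m<n. \<Sum>i<n. S $$ (l,m) * (P $$ (m,i) * Q $$ (i,l)))"
      by (intro sum.cong refl sum.swap)
    also have "\<dots> = (\<Sum>l<n. \<Sum>m<n. S $$ (l,m) * (if m = l then 1 else 0))"
      by (intro sum.cong refl) (simp add: sum_distrib_left[symmetric] PQe)
    also have "\<dots> = 0" by (simp add: if_distrib sum.delta diag0 cong: if_cong)
    finally show ?thesis .
  qed
  obtain i0 where i0: "i0 < n" "d i0 > 0"
  proof (rule ccontr)
    assume "\<not> thesis"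
    hence le: "\<And>i. i < n \<Longrightarrow> d i \<le> 0" using that by fastforce
    have "\<forall>i\<in>{..<n}. - d i = 0"
      by (rule sum_nonneg_eq_0_iff[THEN iffD1]) (use le tr in \<open>auto simp: sum_negf\<close>)
    hence "d 0 = 0" "d 1 = 0" using n2 by auto
    thus False using two[of 0 1] n2 by auto
  qed
  have others: "d i < 0" if "i < n" "i \<noteq> i0" for i
    using two[of i i0] that i0 by force
  have ut: "upper_triangular J" using J Jdiag by (auto simp: upper_triangular_def)
  have diagJ: "diag_mat J = map d [0..<n]" using J unfolding diag_mat_def d_def by simp
  have cpS: "char_poly S = (\<Prod>e\<leftarrow>map d [0..<n]. [:- e, 1:])"
    using char_poly_similar[of S J] wit char_poly_upper_triangular[OF J ut] diagJ
    unfolding similar_mat_def by auto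
  have cnt: "eigen_count S P' = card {i. i < n \<and> P' (d i)}" for P'
    unfolding eigen_count_split[OF S cpS] length_filter_conv_card
    by (intro arg_cong[where f=card]) auto
  have "{i. i < n \<and> d i > 0} = {i0}" using i0 others by force
  hence c1: "eigen_count S (\<lambda>a. a > 0) = 1" unfolding cnt by simp
  have "{i. i < n \<and> d i < 0} = {..<n} - {i0}" using i0 others by force
  hence c2: "eigen_count S (\<lambda>a. a < 0) = n - 1" unfolding cnt using i0 by simp
  have "Determinant.det S = Determinant.det P * Determinant.det J * Determinant.det Q"
    using SPJQ P J Q by (simp add: det_mult[of _ n])
  also have "\<dots> = Determinant.det J * Determinant.det (P * Q)" using P Q by (simp add: det_mult[of _ n])
  also have "\<dots> = prod_list (map d [0..<n])" using PQ det_upper_triangular[OF ut J] diagJ by simp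
  finally have "Determinant.det S \<noteq> 0"
    using i0 others by (auto simp: prod_list_zero_iff) (metis less_irrefl)
  thus ?thesis using c1 c2 by simp
qed


theorem lemma3:
  fixes n :: nat and v :: "nat \<Rightarrow> real^3"
  assumes "n \<ge> 2"
    and "\<And>i. i < n \<Longrightarrow> norm (v i) = 1"
    and "\<And>i j. i < n \<Longrightarrow> j < n \<Longrightarrow> i \<noteq> j \<Longrightarrow> cross3 (v i) (v j) \<noteq> 0"
  defines "S \<equiv> Matrix.mat n n (\<lambda>(i, j). norm (cross3 (v i) (v j)))"
  shows "Determinant.det S \<noteq> 0
    \<and> eigen_count S (\<lambda>a. a > 0) = 1
    \<and> eigen_count S (\<lambda>a. a < 0) = n - 1"
proof -
  have Sc: "S \<in> carrier_mat n n" unfolding S_def by simp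
  have ent: "S $$ (i,j) = norm (cross3 (v i) (v j))" if "i < n" "j < n" for i j
    unfolding S_def using that by simp
  have sym: "S $$ (i,j) = S $$ (j,i)" if "i < n" "j < n" for i j
    using ent[OF that] ent[OF that(2,1)] cross_skew[of "v i" "v j"] by simp
  have diag0: "S $$ (i,i) = 0" if "i < n" for i
    using ent[OF that that] by simp
  have neg: "(\<Sum>i<n. \<Sum>j<n. x i * x j * S $$ (i,j)) < 0"
    if "(\<Sum>i<n. x i) = 0" "\<exists>i<n. x i \<noteq> 0" for x
  proof -
    have "(\<Sum>i<n. \<Sum>j<n. x i * x j * S $$ (i,j)) = (\<Sum>i<n. \<Sum>j<n. x i * x j * norm (cross3 (v i) (v j)))"
      by (intro sum.cong refl) (simp add: ent)
    also have "\<dots> < 0" by (rule negdef[OF assms(2) assms(3) that])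
    finally show ?thesis .
  qed
  obtain es where cp: "char_poly S = (\<Prod>e\<leftarrow>es. [:- e, 1:])"
    using sym_split[OF Sc sym] by blast
  show ?thesis by (rule signature[OF Sc assms(1) sym diag0 neg cp])
qed

end
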